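(* There is a constant $c$ such that for every locally integrable $u:\mathbb R^d\to\mathbb R$ with $\mathcal E(u,u)<\infty$ and every $M>0$, the truncation $u^M(x)=a(x/M)u(x)$ satisfies $\mathcal E(u^M,u^M)<\infty$ and $$\mathcal E(u^M,u^M)\le c\,\mathcal E(u,u)+\frac{c}{M^{d+\alpha}}\Big(\int_{B(2M)}u(x)dx\Big)^2.$$
   Context: $d\ge1$, $\alpha\in(0,2)$, $h:\mathbb R^d\setminus\{0\}\to(0,\infty)$ continuous, even, homogeneous of degree $-(d+\alpha)$; $\mathcal E(v,v)=\frac12\iint h(y-x)(v(y)-v(x))^2dxdy$. $|x|=\max_i|x_i|$, $B(R)=\{x:|x|\le R\}$. $a(x)=1$ if $|x|\le1$, $a(x)=2-|x|$ if $1\le|x|\le2$, $a(x)=0$ if $|x|\ge2$. *)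

theory Defs
  imports "HOL-Analysis.Analysis"
begin

text \<open>Max norm |x| = max_i |x_i| on R^d (index type 'n, d = CARD('n)).\<close>
definition maxnorm :: "real^'n \<Rightarrow> real" where
  "maxnorm x = Max (range (\<lambda>i. \<bar>x $ i\<bar>))"

definition cube :: "real \<Rightarrow> (real^'n) set" where
  "cube R = {x. maxnorm x \<le> R}"

definition cutoff :: "real^'n \<Rightarrow> real" where
  "cutoff x = (if maxnorm x \<le> 1 then 1 else if maxnorm x \<le> 2 then 2 - maxnorm x else 0)"

definition locally_integrable :: "(real^'n \<Rightarrow> real) \<Rightarrow> bool" where
  "locally_integrable u \<longleftrightarrow> (\<forall>K. compact K \<longrightarrow> set_integrable lborel K u)"

definition energy :: "(real^'n \<Rightarrow> real) \<Rightarrow> (real^'n \<Rightarrow> real) \<Rightarrow> ennreal" where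
  "energy h v = ennreal (1/2) *
     (\<integral>\<^sup>+ y. (\<integral>\<^sup>+ x. ennreal (h (y - x) * (v y - v x)^2) \<partial>lborel) \<partial>lborel)"

end

theory Submission
  imports Defs
begin


lemma maxnorm_ge: "\<bar>x $ i\<bar> \<le> maxnorm x"
  unfolding maxnorm_def by (rule Max_ge) auto

lemma maxnorm_le_iff: "maxnorm x \<le> R \<longleftrightarrow> (\<forall>i. \<bar>x $ i\<bar> \<le> R)"
  unfolding maxnorm_def by (subst Max_le_iff) auto

lemma maxnorm_attained: "\<exists>i. maxnorm x = \<bar>x $ i\<bar>"
proof -
  have "maxnorm x \<in> range (\<lambda>i. \<bar>x $ i\<bar>)" unfolding maxnorm_def by (rule Max_in) auto
  then show ?thesis by auto
qed

lemma maxnorm_nonneg: "0 \<le> maxnorm x"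
  using maxnorm_ge[of x] abs_ge_zero order_trans by blast

lemma maxnorm_zero[simp]: "maxnorm (0::real^'n) = 0"
proof -
  have "maxnorm (0::real^'n) \<le> 0" by (simp add: maxnorm_le_iff)
  then show ?thesis using maxnorm_nonneg[of "0::real^'n"] by linarith
qed

lemma maxnorm_eq_0: "maxnorm x = 0 \<longleftrightarrow> x = 0"
proof
  assume "maxnorm x = 0"
  then have "\<forall>i. \<bar>x $ i\<bar> \<le> 0" using maxnorm_le_iff[of x 0] by simp
  then show "x = 0" by (simp add: vec_eq_iff)
qed simp

lemma maxnorm_pos: "x \<noteq> 0 \<Longrightarrow> 0 < maxnorm x"
  using maxnorm_nonneg[of x] maxnorm_eq_0[of x] by linarith

lemma maxnorm_scale: "maxnorm (c *\<^sub>R x) = \<bar>c\<bar> * maxnorm x"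
proof -
  obtain i where i: "maxnorm (c *\<^sub>R x) = \<bar>(c *\<^sub>R x) $ i\<bar>" using maxnorm_attained by blast
  obtain j where j: "maxnorm x = \<bar>x $ j\<bar>" using maxnorm_attained by blast
  have "maxnorm (c *\<^sub>R x) \<le> \<bar>c\<bar> * maxnorm x"
    using i maxnorm_ge[of x i] by (simp add: abs_mult mult_left_mono)
  moreover have "\<bar>c\<bar> * maxnorm x \<le> maxnorm (c *\<^sub>R x)"
    using j maxnorm_ge[of "c *\<^sub>R x" j] by (simp add: abs_mult)
  ultimately show ?thesis by linarith
qed

lemma maxnorm_minus: "maxnorm (- x) = maxnorm x"
  using maxnorm_scale[of "-1" x] by simp

lemma maxnorm_triangle: "maxnorm (x + y) \<le> maxnorm x + maxnorm y"
proof -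
  obtain i where i: "maxnorm (x + y) = \<bar>(x + y) $ i\<bar>" using maxnorm_attained by blast
  show ?thesis using i maxnorm_ge[of x i] maxnorm_ge[of y i] by simp
qed

lemma maxnorm_diff: "\<bar>maxnorm x - maxnorm y\<bar> \<le> maxnorm (x - y)"
  using maxnorm_triangle[of "x - y" y] maxnorm_triangle[of "y - x" x] maxnorm_minus[of "x - y"]
  by (simp add: abs_le_iff)

lemma maxnorm_le_norm: "maxnorm x \<le> norm x"
  using maxnorm_attained[of x] component_le_norm_cart by metis

lemma continuous_maxnorm: "continuous_on S maxnorm"
proof -
  have "lipschitz_on 1 UNIV maxnorm"
    unfolding lipschitz_on_def dist_real_def dist_norm
    using maxnorm_diff maxnorm_le_norm order_trans by fastforce
  then show ?thesis using lipschitz_on_continuous_on continuous_on_subset by blast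
qed

lemma maxnorm_measurable[measurable]: "maxnorm \<in> borel_measurable borel"
  by (rule borel_measurable_continuous_onI) (rule continuous_maxnorm)

lemma cube_cbox: "cube R = cbox (- (\<chi> i. R)) (\<chi> i. R)"
  unfolding cube_def by (auto simp: mem_box_cart maxnorm_le_iff abs_le_iff; smt (verit))

lemma cube_sets[measurable]: "cube R \<in> sets borel"
  unfolding cube_cbox by simp

lemma compact_cube: "compact (cube R)"
  unfolding cube_cbox by simp

lemma emeasure_cube: "0 \<le> R \<Longrightarrow> emeasure lborel (cube R :: (real^'n) set) = ennreal ((2*R) ^ CARD('n))"
proof -
  assume R: "0 \<le> R"
  have "\<forall>b\<in>Basis. (- (\<chi> i. R)) \<bullet> b \<le> (\<chi> i. R) \<bullet> (b :: real^'n)"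
    using R by (auto simp: Basis_vec_def inner_axis)
  moreover have "(\<Prod>b\<in>Basis. ((\<chi> i. R) - (- (\<chi> i. R))) \<bullet> (b::real^'n)) = (\<Prod>b\<in>(Basis::(real^'n) set). 2*R)"
    by (rule prod.cong) (auto simp: Basis_vec_def inner_axis)
  ultimately show ?thesis unfolding cube_cbox using R
    by (simp add: emeasure_lborel_cbox_eq)
qed

lemma cutoff_measurable[measurable]: "cutoff \<in> borel_measurable borel"
  unfolding cutoff_def by measurable

lemma cutoff_bounds: "0 \<le> cutoff x" "cutoff x \<le> 1"
  unfolding cutoff_def by auto

lemma cutoff_lip: "\<bar>cutoff x - cutoff y\<bar> \<le> min 1 (maxnorm (x - y))"
proof -
  have "\<bar>cutoff x - cutoff y\<bar> \<le> \<bar>maxnorm x - maxnorm y\<bar>"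
    unfolding cutoff_def by auto
  then have "\<bar>cutoff x - cutoff y\<bar> \<le> maxnorm (x - y)" using maxnorm_diff order_trans by blast
  moreover have "\<bar>cutoff x - cutoff y\<bar> \<le> 1" using cutoff_bounds[of x] cutoff_bounds[of y] by auto
  ultimately show ?thesis by simp
qed

lemma cutoff_pos_cube: "0 < cutoff x \<Longrightarrow> maxnorm x \<le> 2"
  unfolding cutoff_def by (auto split: if_splits)




lemma nn_integral_scale:
  fixes f :: "real^'n \<Rightarrow> ennreal"
  assumes [measurable]: "f \<in> borel_measurable borel" and c: "0 < c"
  shows "(\<integral>\<^sup>+x. f x \<partial>lborel) = ennreal (c ^ CARD('n)) * (\<integral>\<^sup>+x. f (c *\<^sub>R x) \<partial>lborel)"
proof -
  have "(\<integral>\<^sup>+x. f x \<partial>lborel) = (\<integral>\<^sup>+x. f x \<partial>(density (distr lborel borel (\<lambda>x. 0 + c *\<^sub>R x)) (\<lambda>_. \<bar>c\<bar>^DIM(real^'n))))"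
    using lborel_affine[of c "0::real^'n"] c by simp
  also have "\<dots> = ennreal (c ^ CARD('n)) * (\<integral>\<^sup>+x. f (c *\<^sub>R x) \<partial>lborel)"
    using c by (simp add: nn_integral_density nn_integral_distr nn_integral_cmult)
  finally show ?thesis .
qed

lemma nn_integral_shift:
  fixes f :: "real^'n \<Rightarrow> ennreal"
  assumes [measurable]: "f \<in> borel_measurable borel"
  shows "(\<integral>\<^sup>+x. f x \<partial>lborel) = (\<integral>\<^sup>+x. f (t + x) \<partial>lborel)"
proof -
  have "(\<integral>\<^sup>+x. f x \<partial>lborel) = (\<integral>\<^sup>+x. f x \<partial>(distr lborel borel ((+) t)))"
    by (simp add: lborel_distr_plus)
  also have "\<dots> = (\<integral>\<^sup>+x. f (t + x) \<partial>lborel)"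
    by (simp add: nn_integral_distr)
  finally show ?thesis .
qed

lemma h_measurable:
  fixes h :: "real^'n \<Rightarrow> real"
  assumes "continuous_on (UNIV - {0}) h"
  shows "h \<in> borel_measurable borel"
  by (rule borel_measurable_continuous_countable_exceptions[of "{0}"]) (use assms in \<open>auto simp: Compl_eq_Diff_UNIV\<close>)

lemma li_measurable:
  fixes u :: "real^'n \<Rightarrow> real"
  assumes "locally_integrable u"
  shows "u \<in> borel_measurable borel"
proof (rule borel_measurable_LIMSEQ_real)
  show "(\<lambda>n. indicator (cube (real n)) x * u x) \<longlonglongrightarrow> u x" for x
  proof (rule tendsto_eventually)
    obtain N :: nat where "maxnorm x \<le> N" using real_arch_simple by blast
    then show "\<forall>\<^sub>F n in sequentially. indicator (cube (real n)) x * u x = u x"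
      unfolding eventually_sequentially
      by (intro exI[of _ N]) (auto simp: cube_def indicator_def)
  qed
  show "(\<lambda>x. indicator (cube (real n)) x * u x) \<in> borel_measurable borel" for n
  proof -
    have "set_integrable lborel (cube (real n)) u" using assms compact_cube unfolding locally_integrable_def by blast
    then have "(\<lambda>x. indicator (cube (real n)) x *\<^sub>R u x) \<in> borel_measurable lborel"
      unfolding set_integrable_def by (rule borel_measurable_integrable)
    then show ?thesis by simp
  qed
qed




definition shell :: "real \<Rightarrow> (real^'n) set" where
  "shell a = {w. a \<le> maxnorm w \<and> maxnorm w < 2*a}"

lemma shell_sets[measurable]: "shell a \<in> sets borel"
  unfolding shell_def by measurable

locale kern =
  fixes h :: "real^'n \<Rightarrow> real" and \<alpha> :: real
  assumes alpha: "0 < \<alpha>" "\<alpha> < 2"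
    and h_cont: "continuous_on (UNIV - {0}) h"
    and h_pos: "\<And>x. x \<noteq> 0 \<Longrightarrow> h x > 0"
    and h_even: "\<And>x. x \<noteq> 0 \<Longrightarrow> h (- x) = h x"
    and h_hom: "\<And>x t. x \<noteq> 0 \<Longrightarrow> t > 0 \<Longrightarrow>
                  h (t *\<^sub>R x) = t powr (- (real CARD('n) + \<alpha>)) * h x"
begin

lemma hm[measurable]: "h \<in> borel_measurable borel"
  using h_measurable[OF h_cont] .

lemma h_upper: "\<exists>H\<ge>0. \<forall>w. 1 \<le> maxnorm w \<and> maxnorm w \<le> 2 \<longrightarrow> h w \<le> H"
proof -
  let ?S = "{w::real^'n. 1 \<le> maxnorm w \<and> maxnorm w \<le> 2}"
  have "?S = cube 2 \<inter> maxnorm -` {1..}" unfolding cube_def by auto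
  moreover have "closed (maxnorm -` {1..} :: (real^'n) set)"
    by (intro continuous_closed_vimage continuous_maxnorm[THEN continuous_on_eq_continuous_within[THEN iffD1], rule_format]) auto
  ultimately have cS: "compact ?S" using compact_cube closed_Int_compact by (metis Int_commute)
  have "continuous_on ?S h"
    by (rule continuous_on_subset[OF h_cont]) (auto simp: maxnorm_eq_0[symmetric])
  then have "compact (h ` ?S)" using cS compact_continuous_image by blast
  then obtain B where "\<forall>y\<in>h ` ?S. norm y \<le> B" using compact_imp_bounded bounded_iff by metis
  then show ?thesis by (intro exI[of _ "max B 0"]) force
qed

lemma h_lower: "\<exists>m>0. \<forall>w. maxnorm w = 1 \<longrightarrow> m \<le> h w"
proof -
  let ?S = "{w::real^'n. maxnorm w = 1}"
  have "?S = cube 1 \<inter> maxnorm -` {1..}" unfolding cube_def by auto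
  moreover have "closed (maxnorm -` {1..} :: (real^'n) set)"
    by (intro continuous_closed_vimage continuous_maxnorm[THEN continuous_on_eq_continuous_within[THEN iffD1], rule_format]) auto
  ultimately have cS: "compact ?S" using compact_cube closed_Int_compact by (metis Int_commute)
  have "continuous_on ?S h"
    by (rule continuous_on_subset[OF h_cont]) (auto simp: maxnorm_eq_0[symmetric])
  moreover have "((\<chi> i. 1) :: real^'n) \<in> ?S"
  proof -
    have "maxnorm ((\<chi> i. 1) :: real^'n) \<le> 1" by (simp add: maxnorm_le_iff)
    moreover have "1 \<le> maxnorm ((\<chi> i. 1) :: real^'n)" using maxnorm_ge[of "(\<chi> i. 1) :: real^'n"] by force
    ultimately show ?thesis by simp
  qed
  ultimately obtain x0 where x0: "x0 \<in> ?S" "\<forall>y\<in>?S. h x0 \<le> h y"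
    using continuous_attains_inf[OF cS] by blast
  have "x0 \<noteq> 0" using x0 by auto
  then show ?thesis using x0 h_pos by blast
qed

lemma shell_scale:
  assumes a: "0 < a"
  shows "(\<integral>\<^sup>+w. indicator (shell a) w * ennreal (h w) \<partial>lborel)
       = ennreal (a powr (-\<alpha>)) * (\<integral>\<^sup>+w. indicator (shell 1) w * ennreal (h w) \<partial>lborel)"
proof -
  have "(\<integral>\<^sup>+w. indicator (shell a) w * ennreal (h w) \<partial>lborel)
      = ennreal (a ^ CARD('n)) * (\<integral>\<^sup>+w. indicator (shell a) (a *\<^sub>R w) * ennreal (h (a *\<^sub>R w)) \<partial>lborel)"
    by (rule nn_integral_scale) (use a in auto)
  also have "(\<lambda>w. indicator (shell a) (a *\<^sub>R w) * ennreal (h (a *\<^sub>R w)))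
     = (\<lambda>w. ennreal (a powr (- (real CARD('n) + \<alpha>))) * (indicator (shell 1) w * ennreal (h w)))"
  proof
    fix w :: "real^'n"
    show "indicator (shell a) (a *\<^sub>R w) * ennreal (h (a *\<^sub>R w))
       = ennreal (a powr (- (real CARD('n) + \<alpha>))) * (indicator (shell 1) w * ennreal (h w))"
    proof (cases "w \<in> shell 1")
      case True
      then have "w \<noteq> 0" unfolding shell_def by auto
      moreover have "a *\<^sub>R w \<in> shell a" using True a unfolding shell_def by (auto simp: maxnorm_scale)
      ultimately show ?thesis using True a h_hom[of w a] h_pos[of w]
        by (simp add: ennreal_mult)
    next
      case False
      then have "a *\<^sub>R w \<notin> shell a" using a unfolding shell_def by (auto simp: maxnorm_scale)
      then show ?thesis using False by simp
    qed
  qed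
  also have "ennreal (a ^ CARD('n)) * (\<integral>\<^sup>+w. ennreal (a powr (- (real CARD('n) + \<alpha>))) * (indicator (shell 1) w * ennreal (h w)) \<partial>lborel)
     = ennreal (a ^ CARD('n)) * ennreal (a powr (- (real CARD('n) + \<alpha>))) * (\<integral>\<^sup>+w. indicator (shell 1) w * ennreal (h w) \<partial>lborel)"
    by (subst nn_integral_cmult) (auto simp: mult.assoc)
  also have "ennreal (a ^ CARD('n)) * ennreal (a powr (- (real CARD('n) + \<alpha>))) = ennreal (a powr (-\<alpha>))"
  proof -
    have "a ^ CARD('n) * a powr (- (real CARD('n) + \<alpha>)) = a powr (real CARD('n)) * a powr (- (real CARD('n) + \<alpha>))"
      using a by (simp add: powr_realpow)
    also have "\<dots> = a powr (-\<alpha>)" by (simp add: powr_add[symmetric])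
    finally show ?thesis using a by (simp add: ennreal_mult[symmetric])
  qed
  finally show ?thesis .
qed

lemma shell1_finite: "\<exists>C\<ge>0. (\<integral>\<^sup>+w. indicator (shell 1) w * ennreal (h w) \<partial>lborel) \<le> ennreal C"
proof -
  obtain H where H: "H \<ge> 0" "\<forall>w. 1 \<le> maxnorm w \<and> maxnorm w \<le> 2 \<longrightarrow> h w \<le> H" using h_upper by blast
  have "(\<integral>\<^sup>+w. indicator (shell 1) w * ennreal (h w) \<partial>lborel) \<le> (\<integral>\<^sup>+w. ennreal H * indicator (cube 2 :: (real^'n) set) w \<partial>lborel)"
    apply (rule nn_integral_mono)
    using H by (auto simp: indicator_def shell_def cube_def)
  also have "\<dots> = ennreal H * ennreal ((2*2) ^ CARD('n))"
    by (simp add: nn_integral_cmult_indicator emeasure_cube)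
  also have "\<dots> = ennreal (H * 4 ^ CARD('n))" using H by (simp add: ennreal_mult)
  finally show ?thesis using H by (intro exI[of _ "H * 4 ^ CARD('n)"]) auto
qed

end



lemma pow_powr: "0 < (b::real) \<Longrightarrow> (b ^ k) powr x = (b powr x) ^ k"
  by (induct k) (auto simp: powr_mult)

lemma dyadic: "0 < (r::real) \<Longrightarrow> \<exists>j::int. 2 powr (real_of_int j) \<le> r \<and> r < 2 powr (real_of_int j + 1) \<and> (1 \<le> r \<longleftrightarrow> 0 \<le> j)"
proof -
  assume r: "0 < r"
  define j where "j = \<lfloor>log 2 r\<rfloor>"
  have a: "j \<le> log 2 r" "log 2 r < j + 1" unfolding j_def by linarith+
  have "2 powr j \<le> 2 powr (log 2 r)" using a by simp
  then have 1: "2 powr j \<le> r" using r by simp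
  have "2 powr (log 2 r) < 2 powr (real_of_int j+1)" using a by simp
  then have 2: "r < 2 powr (real_of_int j+1)" using r by simp
  have 3: "1 \<le> r \<longleftrightarrow> 0 \<le> j" unfolding j_def using r by auto
  show ?thesis using 1 2 3 by blast
qed


lemma sum_ge_term: "(f k :: ennreal) \<le> (\<Sum>i. f i)"
  using sum_le_suminf[of f "{k}"] by simp

context kern begin

lemma K_finite: "(\<integral>\<^sup>+w. ennreal (h w * (min 1 (maxnorm w))\<^sup>2) \<partial>lborel) < \<infinity>"
proof -
  obtain C where C: "C \<ge> 0" "(\<integral>\<^sup>+w. indicator (shell 1) w * ennreal (h w) \<partial>lborel) \<le> ennreal C"
    using shell1_finite by blast
  define J where "J a = (\<integral>\<^sup>+w. indicator (shell a) w * ennreal (h w) \<partial>lborel)" for a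
  define G where "G k w = indicator (shell (2^k)) w * ennreal (h w)
      + ennreal ((1/4)^k) * (indicator (shell ((1/2)^(k+1))) w * ennreal (h w))" for k and w :: "real^'n"
  define f where "f k = (2 powr (-\<alpha>))^k * C + 2 powr \<alpha> * (2 powr \<alpha> / 4)^k * C" for k :: nat
  have pt: "ennreal (h w * (min 1 (maxnorm w))\<^sup>2) \<le> (\<Sum>k. G k w)" for w
  proof (cases "w = 0")
    case True then show ?thesis by simp
  next
    case False
    let ?r = "maxnorm w"
    have r: "0 < ?r" using False by (rule maxnorm_pos)
    have hw: "0 < h w" using False h_pos by blast
    obtain j :: int where j: "2 powr (real_of_int j) \<le> ?r" "?r < 2 powr (real_of_int j + 1)" "1 \<le> ?r \<longleftrightarrow> 0 \<le> j"
      using dyadic[OF r] by blast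
    show ?thesis
    proof (cases "1 \<le> ?r")
      case True
      define k where "k = nat j"
      have jk: "real_of_int j = real k" using True j(3) unfolding k_def by simp
      have "2 powr (real k) = 2 ^ k" by (simp add: powr_realpow)
      then have "w \<in> shell (2^k)" using j jk unfolding shell_def
        by (auto simp: powr_add)
      then have "ennreal (h w * (min 1 ?r)\<^sup>2) \<le> G k w" using True unfolding G_def by simp
      also have "\<dots> \<le> (\<Sum>k. G k w)" by (rule sum_ge_term)
      finally show ?thesis .
    next
      case False
      define k where "k = nat (- j - 1)"
      have jk: "real_of_int j = - real k - 1" using False j(3) unfolding k_def by simp
      have e1: "(1/2::real)^(k+1) = 2 powr (real_of_int j)"
      proof -
        have "2 powr (real_of_int j) = 2 powr (- real (k+1))" using jk by (intro arg_cong[where f="\<lambda>t. 2 powr t"]) simp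
        also have "\<dots> = inverse (2 ^ (k+1))" by (subst powr_minus, subst powr_realpow) auto
        finally show ?thesis by (simp only: power_one_over divide_inverse mult_1 power_inverse)
      qed
      have e2: "(1/2::real)^k = 2 powr (real_of_int j+1)"
      proof -
        have "2 powr (real_of_int j + 1) = 2 powr (- real k)" using jk by simp
        also have "\<dots> = inverse (2 ^ k)" by (subst powr_minus, subst powr_realpow) auto
        finally show ?thesis by (simp only: power_one_over divide_inverse mult_1 power_inverse)
      qed
      have sh: "w \<in> shell ((1/2)^(k+1))" using j e1 e2 unfolding shell_def
        by (simp add: powr_add)
      have "?r\<^sup>2 \<le> ((1/2)^k)\<^sup>2" using j(2) e2 r by (intro power_mono) auto
      moreover have "((1/2::real)^k)\<^sup>2 = (1/4)^k" by (simp add: power2_eq_square flip: power_mult_distrib)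
      ultimately have "?r\<^sup>2 \<le> (1/4)^k" by simp
      then have "h w * (min 1 ?r)\<^sup>2 \<le> (1/4)^k * h w" using False hw by (simp add: mult.commute mult_left_mono)
      then have "ennreal (h w * (min 1 ?r)\<^sup>2) \<le> G k w" using sh hw unfolding G_def
        by (simp add: ennreal_mult[symmetric] add_increasing)
      also have "\<dots> \<le> (\<Sum>k. G k w)" by (rule sum_ge_term)
      finally show ?thesis .
    qed
  qed
  have "(\<integral>\<^sup>+w. ennreal (h w * (min 1 (maxnorm w))\<^sup>2) \<partial>lborel) \<le> (\<integral>\<^sup>+w. (\<Sum>k. G k w) \<partial>lborel)"
    by (rule nn_integral_mono) (rule pt)
  also have "\<dots> = (\<Sum>k. \<integral>\<^sup>+w. G k w \<partial>lborel)"
    by (rule nn_integral_suminf) (simp add: G_def)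
  also have "\<dots> = (\<Sum>k. J (2^k) + ennreal ((1/4)^k) * J ((1/2)^(k+1)))"
    unfolding G_def J_def by (subst nn_integral_add) (auto simp: nn_integral_cmult)
  also have "\<dots> \<le> (\<Sum>k. ennreal (f k))"
  proof (rule suminf_le)
    fix k
    have "J (2^k) = ennreal ((2 powr (-\<alpha>))^k) * J 1"
      unfolding J_def by (subst shell_scale) (auto simp: pow_powr)
    also have "\<dots> \<le> ennreal ((2 powr (-\<alpha>))^k) * ennreal C" using C unfolding J_def by (intro mult_left_mono) auto
    finally have 1: "J (2^k) \<le> ennreal ((2 powr (-\<alpha>))^k * C)" using C(1) by (simp add: ennreal_mult)
    have hp: "(1/2::real) powr (-\<alpha>) = 2 powr \<alpha>"
    proof -
      have "(1/2::real) = 2 powr (-1)" by (simp add: powr_minus)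
      then have "(1/2::real) powr (-\<alpha>) = (2 powr (-1)) powr (-\<alpha>)" by simp
      also have "\<dots> = 2 powr \<alpha>" by (subst powr_powr) simp
      finally show ?thesis .
    qed
    have "((1/2::real)^(k+1)) powr (-\<alpha>) = (2 powr \<alpha>)^(k+1)"
      by (subst pow_powr) (simp_all add: hp)
    then have "J ((1/2)^(k+1)) = ennreal ((2 powr \<alpha>)^(k+1)) * J 1"
      unfolding J_def by (subst shell_scale) auto
    also have "\<dots> \<le> ennreal ((2 powr \<alpha>)^(k+1)) * ennreal C" using C unfolding J_def by (intro mult_left_mono) auto
    finally have "ennreal ((1/4)^k) * J ((1/2)^(k+1)) \<le> ennreal ((1/4)^k) * (ennreal ((2 powr \<alpha>)^(k+1)) * ennreal C)"
      by (intro mult_left_mono) auto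
    also have "\<dots> = ennreal ((1/4)^k * ((2 powr \<alpha>)^(k+1) * C))"
      using C(1) by (simp add: ennreal_mult)
    also have "(1/4::real)^k * ((2 powr \<alpha>)^(k+1) * C) = 2 powr \<alpha> * (2 powr \<alpha> / 4)^k * C"
      by (simp add: power_divide power_one_over)
    finally have 2: "ennreal ((1/4)^k) * J ((1/2)^(k+1)) \<le> ennreal (2 powr \<alpha> * (2 powr \<alpha> / 4)^k * C)" .
    have "J (2^k) + ennreal ((1/4)^k) * J ((1/2)^(k+1)) \<le> ennreal ((2 powr (-\<alpha>))^k * C) + ennreal (2 powr \<alpha> * (2 powr \<alpha> / 4)^k * C)"
      by (rule add_mono[OF 1 2])
    also have "\<dots> = ennreal (f k)"
      unfolding f_def using C(1) by (subst ennreal_plus) auto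
    finally show "J (2^k) + ennreal ((1/4)^k) * J ((1/2)^(k+1)) \<le> ennreal (f k)" .
  qed (rule summableI)+
  also have "\<dots> < \<infinity>"
  proof -
    have q1: "2 powr (-\<alpha>) < 1" using alpha by (simp add: powr_minus inverse_less_1_iff)
    have "2 powr \<alpha> < 4" using powr_less_mono[of \<alpha> 2 2] alpha by simp
    then have q2: "2 powr \<alpha> / 4 < 1" by simp
    have "summable f" unfolding f_def
      using q1 q2 by (intro summable_add summable_mult2 summable_mult summable_geometric) auto
    moreover have "\<And>k. 0 \<le> f k" unfolding f_def using C(1)
      by (intro add_nonneg_nonneg mult_nonneg_nonneg zero_le_power) auto
    ultimately have "(\<Sum>k. ennreal (f k)) \<noteq> top" by (intro ennreal_suminf_neq_top)
    then show ?thesis by (simp add: top.not_eq_extremum)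
  qed
  finally show ?thesis .
qed

end



lemma ennreal_integral_le_nn:
  fixes g :: "'a \<Rightarrow> real"
  assumes "integrable M g"
  shows "ennreal (integral\<^sup>L M g) \<le> (\<integral>\<^sup>+x. ennreal (g x) \<partial>M)"
proof -
  have i: "integrable M (\<lambda>x. max (g x) 0)" using assms by auto
  have "integral\<^sup>L M g \<le> integral\<^sup>L M (\<lambda>x. max (g x) 0)"
    using assms i by (intro integral_mono) auto
  then have "ennreal (integral\<^sup>L M g) \<le> ennreal (integral\<^sup>L M (\<lambda>x. max (g x) 0))" by simp
  also have "\<dots> = (\<integral>\<^sup>+x. ennreal (max (g x) 0) \<partial>M)"
    using i by (subst nn_integral_eq_integral) auto
  also have "\<dots> = (\<integral>\<^sup>+x. ennreal (g x) \<partial>M)"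
    by (intro nn_integral_cong) (auto simp: max_def ennreal_neg)
  finally show ?thesis .
qed

lemma cs_ineq:
  fixes f :: "'a::euclidean_space \<Rightarrow> real"
  assumes A: "A \<in> sets lborel" "emeasure lborel A = ennreal mu" "0 < mu"
    and f: "set_integrable lborel A f"
  shows "ennreal ((set_lebesgue_integral lborel A f)\<^sup>2 / mu) \<le> (\<integral>\<^sup>+x. indicator A x * ennreal ((f x)\<^sup>2) \<partial>lborel)"
proof -
  define s where "s = set_lebesgue_integral lborel A f"
  define c where "c = s / mu"
  define g where "g x = 2 * c * (indicator A x * f x) - c\<^sup>2 * indicator A x" for x
  have i1: "integrable lborel (\<lambda>x. indicator A x * f x)" using f unfolding set_integrable_def by simp
  have i2: "integrable lborel (\<lambda>x. indicator A x :: real)"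
    using A by (intro integrable_real_indicator) auto
  have mA: "measure lborel A = mu" using A by (simp add: measure_def)
  have ig: "integrable lborel g" unfolding g_def using i1 i2 by auto
  have ii: "integral\<^sup>L lborel (\<lambda>x. indicator A x :: real) = mu"
    using A mA by simp
  have "integral\<^sup>L lborel g = 2 * c * integral\<^sup>L lborel (\<lambda>x. indicator A x * f x) - c\<^sup>2 * integral\<^sup>L lborel (\<lambda>x. indicator A x :: real)"
    unfolding g_def using i1 i2 by simp
  also have "\<dots> = 2 * c * s - c\<^sup>2 * mu"
    unfolding s_def set_lebesgue_integral_def ii by simp
  also have "\<dots> = s\<^sup>2 / mu" unfolding c_def using A by (simp add: power2_eq_square field_simps)
  finally have eq: "integral\<^sup>L lborel g = s\<^sup>2 / mu" .
  have "ennreal (s\<^sup>2 / mu) \<le> (\<integral>\<^sup>+x. ennreal (g x) \<partial>lborel)"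
    using ennreal_integral_le_nn[OF ig] eq by simp
  also have "\<dots> \<le> (\<integral>\<^sup>+x. indicator A x * ennreal ((f x)\<^sup>2) \<partial>lborel)"
  proof (rule nn_integral_mono)
    fix x
    have "g x \<le> indicator A x * (f x)\<^sup>2"
    proof (cases "x \<in> A")
      case True
      have "0 \<le> (f x - c)\<^sup>2" by simp
      then show ?thesis using True unfolding g_def by (simp add: power2_eq_square algebra_simps)
    qed (simp add: g_def)
    then have "ennreal (g x) \<le> ennreal (indicator A x * (f x)\<^sup>2)" by (rule ennreal_leI)
    then show "ennreal (g x) \<le> indicator A x * ennreal ((f x)\<^sup>2)" by (cases "x \<in> A") (auto simp: g_def)
  qed
  finally show ?thesis unfolding s_def .
qed

lemma sq_le: "(p+q)\<^sup>2 \<le> 2*p\<^sup>2 + 2*(q::real)\<^sup>2"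
proof -
  have "0 \<le> (p-q)\<^sup>2" by simp
  then show ?thesis by (simp add: power2_eq_square algebra_simps)
qed

lemma pw_half:
  fixes ax ay ux uy ix iy :: real
  assumes "0 \<le> ay" "ay \<le> 1" "ay \<le> ax" "0 \<le> iy" "ay < ax \<Longrightarrow> ix = 1"
  shows "(ay*uy - ax*ux)\<^sup>2 \<le> 2*(uy-ux)\<^sup>2 + 2*(ay - ax)\<^sup>2 * (ix * ux\<^sup>2 + iy * uy\<^sup>2)"
proof -
  have f1: "ay*uy - ax*ux = ay*(uy-ux) + ux*(ay-ax)" by (simp add: algebra_simps)
  have f2: "(ay*(uy-ux) + ux*(ay-ax))\<^sup>2 \<le> 2*(ay*(uy-ux))\<^sup>2 + 2*(ux*(ay-ax))\<^sup>2" by (rule sq_le)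
  have f3: "(ay*(uy-ux))\<^sup>2 = ay\<^sup>2*(uy-ux)\<^sup>2" by (rule power_mult_distrib)
  have "ay\<^sup>2 \<le> 1" using assms by (simp add: power_le_one)
  then have f4: "ay\<^sup>2*(uy-ux)\<^sup>2 \<le> (uy-ux)\<^sup>2" by (intro mult_left_le_one_le) auto
  have f5: "(ux*(ay-ax))\<^sup>2 \<le> (ay-ax)\<^sup>2*(ix*ux\<^sup>2)"
  proof (cases "ay = ax")
    case False
    then have "ix = 1" using assms by auto
    then show ?thesis by (simp add: power_mult_distrib)
  qed simp
  have f6: "0 \<le> (ay-ax)\<^sup>2*(iy*uy\<^sup>2)" using assms by simp
  have f7: "2*(ay - ax)\<^sup>2 * (ix * ux\<^sup>2 + iy * uy\<^sup>2) = 2*((ay-ax)\<^sup>2*(ix*ux\<^sup>2)) + 2*((ay-ax)\<^sup>2*(iy*uy\<^sup>2))"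
    by (simp add: distrib_left mult.assoc)
  show ?thesis unfolding f1 using f2 f3 f4 f5 f6 f7 by linarith
qed

lemma pw_real:
  fixes ax ay ux uy ix iy :: real
  assumes "0 \<le> ax" "ax \<le> 1" "0 \<le> ay" "ay \<le> 1" "0 \<le> ix" "0 \<le> iy"
    and "0 < ax \<Longrightarrow> ix = 1" "0 < ay \<Longrightarrow> iy = 1"
  shows "(ay*uy - ax*ux)\<^sup>2 \<le> 2*(uy-ux)\<^sup>2 + 2*(ay - ax)\<^sup>2 * (ix * ux\<^sup>2 + iy * uy\<^sup>2)"
proof (cases "ay \<le> ax")
  case True
  then show ?thesis using assms by (intro pw_half) auto
next
  case False
  have "(ax*ux - ay*uy)\<^sup>2 \<le> 2*(ux-uy)\<^sup>2 + 2*(ax - ay)\<^sup>2 * (iy * uy\<^sup>2 + ix * ux\<^sup>2)"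
    using False assms by (intro pw_half) auto
  moreover have "(ax*ux - ay*uy)\<^sup>2 = (ay*uy - ax*ux)\<^sup>2" "(ux-uy)\<^sup>2 = (uy-ux)\<^sup>2" "(ax - ay)\<^sup>2 = (ay - ax)\<^sup>2"
    by (simp_all add: power2_commute)
  ultimately show ?thesis by (simp add: add.commute)
qed

context kern begin

definition "K = (\<integral>\<^sup>+w. ennreal (h w * (min 1 (maxnorm w))\<^sup>2) \<partial>lborel)"

lemma kernel:
  assumes M: "0 < M"
  shows "(\<integral>\<^sup>+q. ennreal (h (q - p) * (cutoff ((1/M) *\<^sub>R q) - cutoff ((1/M) *\<^sub>R p))\<^sup>2) \<partial>lborel)
     \<le> ennreal (M powr (-\<alpha>)) * K"
proof -
  let ?a = "\<lambda>q. cutoff ((1/M) *\<^sub>R q)"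
  have "(\<integral>\<^sup>+q. ennreal (h (q - p) * (?a q - ?a p)\<^sup>2) \<partial>lborel)
      = (\<integral>\<^sup>+w. ennreal (h ((p + w) - p) * (?a (p + w) - ?a p)\<^sup>2) \<partial>lborel)"
    by (rule nn_integral_shift) simp
  also have "\<dots> \<le> (\<integral>\<^sup>+w. ennreal (h w * (min 1 (maxnorm ((1/M) *\<^sub>R w)))\<^sup>2) \<partial>lborel)"
  proof (rule nn_integral_mono)
    fix w :: "real^'n"
    show "ennreal (h ((p + w) - p) * (?a (p + w) - ?a p)\<^sup>2) \<le> ennreal (h w * (min 1 (maxnorm ((1/M) *\<^sub>R w)))\<^sup>2)"
    proof (cases "w = 0")
      case False
      have "\<bar>?a (p + w) - ?a p\<bar> \<le> min 1 (maxnorm ((1/M) *\<^sub>R (p + w) - (1/M) *\<^sub>R p))"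
        by (rule cutoff_lip)
      also have "(1/M) *\<^sub>R (p + w) - (1/M) *\<^sub>R p = (1/M) *\<^sub>R w" by (simp add: algebra_simps)
      finally have "\<bar>?a (p + w) - ?a p\<bar> \<le> min 1 (maxnorm ((1/M) *\<^sub>R w))" .
      then have "\<bar>?a (p + w) - ?a p\<bar>\<^sup>2 \<le> (min 1 (maxnorm ((1/M) *\<^sub>R w)))\<^sup>2"
        by (intro power_mono) auto
      then have "(?a (p + w) - ?a p)\<^sup>2 \<le> (min 1 (maxnorm ((1/M) *\<^sub>R w)))\<^sup>2" by simp
      then show ?thesis using h_pos[OF False] by (intro ennreal_leI) (simp add: mult_left_mono)
    qed simp
  qed
  also have "\<dots> = ennreal (M ^ CARD('n)) * (\<integral>\<^sup>+w. ennreal (h (M *\<^sub>R w) * (min 1 (maxnorm ((1/M) *\<^sub>R (M *\<^sub>R w))))\<^sup>2) \<partial>lborel)"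
    by (rule nn_integral_scale) (use M in auto)
  also have "(\<lambda>w. ennreal (h (M *\<^sub>R w) * (min 1 (maxnorm ((1/M) *\<^sub>R (M *\<^sub>R w))))\<^sup>2))
      = (\<lambda>w. ennreal (M powr (- (real CARD('n) + \<alpha>))) * ennreal (h w * (min 1 (maxnorm w))\<^sup>2))"
  proof
    fix w :: "real^'n"
    show "ennreal (h (M *\<^sub>R w) * (min 1 (maxnorm ((1/M) *\<^sub>R (M *\<^sub>R w))))\<^sup>2)
      = ennreal (M powr (- (real CARD('n) + \<alpha>))) * ennreal (h w * (min 1 (maxnorm w))\<^sup>2)"
    proof (cases "w = 0")
      case False
      then show ?thesis using M h_hom[OF False M] h_pos[OF False]
        by (simp add: ennreal_mult[symmetric] mult.assoc)
    qed simp
  qed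
  also have "ennreal (M ^ CARD('n)) * (\<integral>\<^sup>+w. ennreal (M powr (- (real CARD('n) + \<alpha>))) * ennreal (h w * (min 1 (maxnorm w))\<^sup>2) \<partial>lborel)
      = ennreal (M ^ CARD('n)) * ennreal (M powr (- (real CARD('n) + \<alpha>))) * K"
    unfolding K_def by (subst nn_integral_cmult) (auto simp: mult.assoc)
  also have "ennreal (M ^ CARD('n)) * ennreal (M powr (- (real CARD('n) + \<alpha>))) = ennreal (M powr (-\<alpha>))"
  proof -
    have "M ^ CARD('n) * M powr (- (real CARD('n) + \<alpha>)) = M powr (real CARD('n)) * M powr (- (real CARD('n) + \<alpha>))"
      using M by (simp add: powr_realpow)
    also have "\<dots> = M powr (-\<alpha>)" by (simp add: powr_add[symmetric])
    finally show ?thesis using M by (simp add: ennreal_mult[symmetric])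
  qed
  finally show ?thesis .
qed

lemma K_real: "K = ennreal (enn2real K)" "0 \<le> enn2real K"
  using K_finite unfolding K_def by (auto simp: less_top)

lemma h_lower_norm: "\<exists>m>0. \<forall>z R. z \<noteq> 0 \<longrightarrow> maxnorm z \<le> R \<longrightarrow> m * R powr (- (real CARD('n) + \<alpha>)) \<le> h z"
proof -
  obtain m where m: "m > 0" "\<forall>w. maxnorm w = 1 \<longrightarrow> m \<le> h w" using h_lower by blast
  have "m * R powr (- (real CARD('n) + \<alpha>)) \<le> h z" if z: "z \<noteq> 0" "maxnorm z \<le> R" for z R
  proof -
    let ?r = "maxnorm z"
    have r: "0 < ?r" using z maxnorm_pos by blast
    have z1: "maxnorm ((1/?r) *\<^sub>R z) = 1" using r by (simp add: maxnorm_scale)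
    then have nz: "(1/?r) *\<^sub>R z \<noteq> 0" by auto
    have "z = ?r *\<^sub>R ((1/?r) *\<^sub>R z)" using r by simp
    then have "h z = ?r powr (- (real CARD('n) + \<alpha>)) * h ((1/?r) *\<^sub>R z)"
      using h_hom[OF nz r] by metis
    moreover have "R powr (- (real CARD('n) + \<alpha>)) \<le> ?r powr (- (real CARD('n) + \<alpha>))"
      using r z alpha by (intro powr_mono2') auto
    moreover have "m \<le> h ((1/?r) *\<^sub>R z)" using m z1 by blast
    ultimately show ?thesis using m by (simp add: mult.commute mult_mono)
  qed
  then show ?thesis using m by blast
qed

end



lemma set_shift:
  fixes u :: "'a::euclidean_space \<Rightarrow> real"
  assumes A: "A \<in> sets lborel" "emeasure lborel A = ennreal mu" "0 \<le> mu" and u: "set_integrable lborel A u"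
  shows "set_integrable lborel A (\<lambda>x. c - u x)"
    "set_lebesgue_integral lborel A (\<lambda>x. c - u x) = c*mu - set_lebesgue_integral lborel A u"
proof -
  have i1: "integrable lborel (\<lambda>x. indicator A x * u x)" using u unfolding set_integrable_def by simp
  have i2: "integrable lborel (\<lambda>x. indicator A x :: real)"
    using A by (intro integrable_real_indicator) auto
  have eq: "(\<lambda>x. indicator A x *\<^sub>R (c - u x)) = (\<lambda>x. c * indicator A x - indicator A x * u x)"
    by (auto simp: algebra_simps)
  show "set_integrable lborel A (\<lambda>x. c - u x)" unfolding set_integrable_def eq using i1 i2 by auto
  have mA: "measure lborel A = mu" using A by (simp add: measure_def)
  show "set_lebesgue_integral lborel A (\<lambda>x. c - u x) = c*mu - set_lebesgue_integral lborel A u"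
    unfolding set_lebesgue_integral_def eq using i1 i2 A mA by simp
qed

lemma alg1: "(P::real)>0 \<Longrightarrow> D>0 \<Longrightarrow> F>0 \<Longrightarrow> m>0 \<Longrightarrow>
  e + 2*((1/P)*k*(2/(F*D)*(F*D*Q*P/m)*e + 2*S\<^sup>2/(F*D))) = e + 4*k*Q*e/m + 4*k*S\<^sup>2/(D*P)/F"
  by (simp add: field_simps power2_eq_square)
lemma alg2: "(P::real)>0 \<Longrightarrow> D>0 \<Longrightarrow> m>0 \<Longrightarrow>
  (2 + 8*k*Q/m)*(e/2) + 4*k/(D*P)*S\<^sup>2 = e + 4*k*Q*e/m + 4*k*S\<^sup>2/(D*P)"
  by (simp add: field_simps power2_eq_square)

lemma ennreal_sum3: "0 \<le> X \<Longrightarrow> 0 \<le> Y \<Longrightarrow> 0 \<le> Z \<Longrightarrow>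
  ennreal (2*X + 2*Y + 2*Z) = 2 * ennreal X + 2 * ennreal Y + 2 * ennreal Z"
proof -
  assume n: "0 \<le> X" "0 \<le> Y" "0 \<le> Z"
  have "ennreal (2*X + 2*Y + 2*Z) = ennreal (2*X + 2*Y) + ennreal (2*Z)" using n by (intro ennreal_plus) auto
  also have "ennreal (2*X + 2*Y) = ennreal (2*X) + ennreal (2*Y)" using n by (intro ennreal_plus) auto
  also have "ennreal (2*X) = ennreal 2 * ennreal X" using n by (intro ennreal_mult) auto
  also have "ennreal (2*Y) = ennreal 2 * ennreal Y" using n by (intro ennreal_mult) auto
  also have "ennreal (2*Z) = ennreal 2 * ennreal Z" using n by (intro ennreal_mult) auto
  finally show ?thesis by simp
qed

lemma ennreal_half_2: "ennreal (1/2) * (2 * x) = x"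
proof -
  have "ennreal (1/2) * ennreal 2 = ennreal ((1/2) * 2)" by (rule ennreal_mult[symmetric]) auto
  then have "ennreal (1/2) * 2 = 1" by simp
  then show ?thesis by (simp add: mult.assoc[symmetric])
qed

context kern begin

lemma main:
  fixes u :: "real^'n \<Rightarrow> real" and M m :: real
  assumes li: "locally_integrable u" and fin: "energy h u < \<infinity>" and M: "0 < M"
    and m: "m > 0" "\<forall>z R. z \<noteq> 0 \<longrightarrow> maxnorm z \<le> R \<longrightarrow> m * R powr (- (real CARD('n) + \<alpha>)) \<le> h z"
  shows "energy h (\<lambda>x. cutoff ((1/M) *\<^sub>R x) * u x)
     \<le> ennreal (2 + 8 * enn2real K * 4 powr \<alpha> / m) * energy h u
       + ennreal (4 * enn2real K / M powr (real CARD('n) + \<alpha>) * (set_lebesgue_integral lborel (cube (2*M)) u)\<^sup>2)"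
proof -
  have um[measurable]: "u \<in> borel_measurable borel" using li by (rule li_measurable)
  define a where "a x = cutoff ((1/M) *\<^sub>R x)" for x :: "real^'n"
  have am[measurable]: "a \<in> borel_measurable borel" unfolding a_def by measurable
  define B where "B = (cube (2*M) :: (real^'n) set)"
  have Bm[measurable]: "B \<in> sets borel" unfolding B_def by simp
  define S where "S = set_lebesgue_integral lborel B u"
  define k where "k = enn2real K"
  define mu where "mu = (4*M) ^ CARD('n)"
  have mu: "0 < mu" unfolding mu_def using M by simp
  have emB: "emeasure lborel B = ennreal mu" unfolding B_def mu_def using M by (subst emeasure_cube) auto
  define E where "E = (\<integral>\<^sup>+y. \<integral>\<^sup>+x. ennreal (h (y - x) * (u y - u x)\<^sup>2) \<partial>lborel \<partial>lborel)"
  have enE: "energy h u = ennreal (1/2) * E" unfolding energy_def E_def ..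
  obtain e where e: "E = ennreal e" "0 \<le> e"
  proof -
    have "E \<noteq> \<infinity>" using fin unfolding enE by (auto simp: ennreal_mult_eq_top_iff)
    then show ?thesis using that by (cases E) auto
  qed
  have Knn: "0 \<le> k" "K = ennreal k" unfolding k_def using K_real by auto
  define I where "I = (\<integral>\<^sup>+y. ennreal (indicator B y * (u y)\<^sup>2) \<partial>lborel)"
  have ann: "0 \<le> h (y - x) * (a y - a x)\<^sup>2" for x y
    using h_pos[of "y - x"] by (cases "y = x") auto
  define P1 where "P1 y x = ennreal (h (y - x) * (a y - a x)\<^sup>2 * (indicator B x * (u x)\<^sup>2))" for y x
  define P2 where "P2 y x = ennreal (h (y - x) * (a y - a x)\<^sup>2 * (indicator B y * (u y)\<^sup>2))" for y x
  define Du where "Du y x = ennreal (h (y - x) * (u y - u x)\<^sup>2)" for y x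
  have [measurable]: "case_prod P1 \<in> borel_measurable (lborel \<Otimes>\<^sub>M lborel)"
    "case_prod P2 \<in> borel_measurable (lborel \<Otimes>\<^sub>M lborel)"
    "case_prod Du \<in> borel_measurable (lborel \<Otimes>\<^sub>M lborel)"
    unfolding P1_def P2_def Du_def case_prod_beta
    subgoal by measurable
    subgoal by measurable
    subgoal by measurable
    done
  have [measurable]: "P1 y \<in> borel_measurable lborel" "P2 y \<in> borel_measurable lborel"
    "Du y \<in> borel_measurable lborel" for y
    unfolding P1_def P2_def Du_def
    subgoal by measurable
    subgoal by measurable
    subgoal by measurable
    done
  have [measurable]: "(\<lambda>y. \<integral>\<^sup>+x. P1 y x \<partial>lborel) \<in> borel_measurable lborel"
    "(\<lambda>y. \<integral>\<^sup>+x. P2 y x \<partial>lborel) \<in> borel_measurable lborel"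
    "(\<lambda>y. \<integral>\<^sup>+x. Du y x \<partial>lborel) \<in> borel_measurable lborel"
    subgoal by (rule lborel.borel_measurable_nn_integral) measurable
    subgoal by (rule lborel.borel_measurable_nn_integral) measurable
    subgoal by (rule lborel.borel_measurable_nn_integral) measurable
    done

  have inB: "0 < a x \<Longrightarrow> indicator B x = (1::real)" for x
  proof -
    assume "0 < a x"
    then have "maxnorm ((1/M) *\<^sub>R x) \<le> 2" unfolding a_def by (rule cutoff_pos_cube)
    then have "maxnorm x \<le> 2*M" using M by (simp add: maxnorm_scale field_simps)
    then show ?thesis unfolding B_def cube_def by simp
  qed
  have abnd: "0 \<le> a x" "a x \<le> 1" for x unfolding a_def using cutoff_bounds by auto
  have step1: "ennreal (h (y - x) * (a y * u y - a x * u x)\<^sup>2) \<le> 2 * Du y x + 2 * P1 y x + 2 * P2 y x" for x y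
  proof (cases "y = x")
    case False
    then have hp: "0 < h (y - x)" using h_pos by simp
    have "(a y * u y - a x * u x)\<^sup>2 \<le> 2*(u y - u x)\<^sup>2 + 2*(a y - a x)\<^sup>2 * (indicator B x * (u x)\<^sup>2 + indicator B y * (u y)\<^sup>2)"
      by (rule pw_real) (auto simp: abnd inB)
    then have "h (y - x) * (a y * u y - a x * u x)\<^sup>2 \<le> h (y - x) * (2*(u y - u x)\<^sup>2 + 2*(a y - a x)\<^sup>2 * (indicator B x * (u x)\<^sup>2 + indicator B y * (u y)\<^sup>2))"
      using hp by (intro mult_left_mono) auto
    also have "\<dots> = 2 * (h (y - x) * (u y - u x)\<^sup>2) + 2 * (h (y - x) * (a y - a x)\<^sup>2 * (indicator B x * (u x)\<^sup>2))
        + 2 * (h (y - x) * (a y - a x)\<^sup>2 * (indicator B y * (u y)\<^sup>2))"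
      by (simp add: algebra_simps)
    finally have "ennreal (h (y - x) * (a y * u y - a x * u x)\<^sup>2) \<le> ennreal (2 * (h (y - x) * (u y - u x)\<^sup>2) + 2 * (h (y - x) * (a y - a x)\<^sup>2 * (indicator B x * (u x)\<^sup>2))
        + 2 * (h (y - x) * (a y - a x)\<^sup>2 * (indicator B y * (u y)\<^sup>2)))"
      by (rule ennreal_leI)
    also have "\<dots> = 2 * Du y x + 2 * P1 y x + 2 * P2 y x"
      unfolding Du_def P1_def P2_def using hp
      by (intro ennreal_sum3 mult_nonneg_nonneg) auto
    finally show ?thesis .
  qed simp
  have step2: "energy h (\<lambda>x. cutoff ((1/M) *\<^sub>R x) * u x)
      \<le> E + (\<integral>\<^sup>+y. \<integral>\<^sup>+x. P1 y x \<partial>lborel \<partial>lborel) + (\<integral>\<^sup>+y. \<integral>\<^sup>+x. P2 y x \<partial>lborel \<partial>lborel)"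
  proof -
    have "energy h (\<lambda>x. cutoff ((1/M) *\<^sub>R x) * u x)
       = ennreal (1/2) * (\<integral>\<^sup>+y. \<integral>\<^sup>+x. ennreal (h (y - x) * (a y * u y - a x * u x)\<^sup>2) \<partial>lborel \<partial>lborel)"
      unfolding energy_def a_def ..
    also have "\<dots> \<le> ennreal (1/2) * (\<integral>\<^sup>+y. \<integral>\<^sup>+x. 2 * Du y x + 2 * P1 y x + 2 * P2 y x \<partial>lborel \<partial>lborel)"
      by (intro mult_left_mono nn_integral_mono step1) auto
    also have "(\<lambda>y. \<integral>\<^sup>+x. 2 * Du y x + 2 * P1 y x + 2 * P2 y x \<partial>lborel)
        = (\<lambda>y. 2 * (\<integral>\<^sup>+x. Du y x \<partial>lborel) + 2 * (\<integral>\<^sup>+x. P1 y x \<partial>lborel) + 2 * (\<integral>\<^sup>+x. P2 y x \<partial>lborel))"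
      by (intro ext, subst nn_integral_add, measurable, subst nn_integral_add, measurable)
         (simp add: nn_integral_cmult)
    also have "(\<integral>\<^sup>+y. 2 * (\<integral>\<^sup>+x. Du y x \<partial>lborel) + 2 * (\<integral>\<^sup>+x. P1 y x \<partial>lborel) + 2 * (\<integral>\<^sup>+x. P2 y x \<partial>lborel) \<partial>lborel)
        = 2 * E + 2 * (\<integral>\<^sup>+y. \<integral>\<^sup>+x. P1 y x \<partial>lborel \<partial>lborel) + 2 * (\<integral>\<^sup>+y. \<integral>\<^sup>+x. P2 y x \<partial>lborel \<partial>lborel)"
      unfolding E_def Du_def[symmetric]
      by (subst nn_integral_add, measurable, subst nn_integral_add, measurable)
         (simp add: nn_integral_cmult)
    also have "2 * E + 2 * (\<integral>\<^sup>+y. \<integral>\<^sup>+x. P1 y x \<partial>lborel \<partial>lborel) + 2 * (\<integral>\<^sup>+y. \<integral>\<^sup>+x. P2 y x \<partial>lborel \<partial>lborel)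
       = 2 * (E + (\<integral>\<^sup>+y. \<integral>\<^sup>+x. P1 y x \<partial>lborel \<partial>lborel) + (\<integral>\<^sup>+y. \<integral>\<^sup>+x. P2 y x \<partial>lborel \<partial>lborel))"
      by (simp add: distrib_left)
    finally show ?thesis by (simp only: ennreal_half_2)
  qed
  have kern1: "(\<integral>\<^sup>+x. ennreal (h (x - p) * (a x - a p)\<^sup>2) \<partial>lborel) \<le> ennreal (M powr (-\<alpha>)) * K" for p
    unfolding a_def by (rule kernel[OF M])
  have kern2: "(\<integral>\<^sup>+x. ennreal (h (p - x) * (a p - a x)\<^sup>2) \<partial>lborel) \<le> ennreal (M powr (-\<alpha>)) * K" for p
  proof -
    have "(\<integral>\<^sup>+x. ennreal (h (p - x) * (a p - a x)\<^sup>2) \<partial>lborel) = (\<integral>\<^sup>+x. ennreal (h (x - p) * (a x - a p)\<^sup>2) \<partial>lborel)"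
    proof (intro nn_integral_cong)
      fix x
      show "ennreal (h (p - x) * (a p - a x)\<^sup>2) = ennreal (h (x - p) * (a x - a p)\<^sup>2)"
      proof (cases "x = p")
        case False
        then have "h (- (x - p)) = h (x - p)" by (intro h_even) simp
        then show ?thesis by (simp add: power2_commute)
      qed simp
    qed
    then show ?thesis using kern1 by simp
  qed
  have step3: "(\<integral>\<^sup>+y. \<integral>\<^sup>+x. P2 y x \<partial>lborel \<partial>lborel) \<le> ennreal (M powr (-\<alpha>)) * K * I"
  proof -
    have "(\<integral>\<^sup>+x. P2 y x \<partial>lborel) = ennreal (indicator B y * (u y)\<^sup>2) * (\<integral>\<^sup>+x. ennreal (h (y - x) * (a y - a x)\<^sup>2) \<partial>lborel)" for y
    proof -
      have "(\<integral>\<^sup>+x. P2 y x \<partial>lborel) = (\<integral>\<^sup>+x. ennreal (indicator B y * (u y)\<^sup>2) * ennreal (h (y - x) * (a y - a x)\<^sup>2) \<partial>lborel)"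
        unfolding P2_def using ann by (intro nn_integral_cong) (simp add: ennreal_mult[symmetric] mult.commute)
      also have "\<dots> = ennreal (indicator B y * (u y)\<^sup>2) * (\<integral>\<^sup>+x. ennreal (h (y - x) * (a y - a x)\<^sup>2) \<partial>lborel)"
        by (rule nn_integral_cmult) measurable
      finally show ?thesis .
    qed
    then have "(\<integral>\<^sup>+y. \<integral>\<^sup>+x. P2 y x \<partial>lborel \<partial>lborel) \<le> (\<integral>\<^sup>+y. ennreal (indicator B y * (u y)\<^sup>2) * (ennreal (M powr (-\<alpha>)) * K) \<partial>lborel)"
      using kern2 by (intro nn_integral_mono) (simp add: mult_left_mono)
    also have "\<dots> = ennreal (M powr (-\<alpha>)) * K * I"
      unfolding I_def by (subst nn_integral_multc) (auto simp: mult.commute)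
    finally show ?thesis .
  qed
  have step4: "(\<integral>\<^sup>+y. \<integral>\<^sup>+x. P1 y x \<partial>lborel \<partial>lborel) \<le> ennreal (M powr (-\<alpha>)) * K * I"
  proof -
    have "(\<integral>\<^sup>+y. \<integral>\<^sup>+x. P1 y x \<partial>lborel \<partial>lborel) = (\<integral>\<^sup>+x. \<integral>\<^sup>+y. P1 y x \<partial>lborel \<partial>lborel)"
    proof -
      have "case_prod (\<lambda>x y. P1 y x) \<in> borel_measurable (lborel \<Otimes>\<^sub>M lborel)"
        unfolding P1_def case_prod_beta by measurable
      then show ?thesis by (rule lborel_pair.Fubini')
    qed
    also have "(\<lambda>x. \<integral>\<^sup>+y. P1 y x \<partial>lborel) = (\<lambda>x. ennreal (indicator B x * (u x)\<^sup>2) * (\<integral>\<^sup>+y. ennreal (h (y - x) * (a y - a x)\<^sup>2) \<partial>lborel))"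
    proof
      fix x
      have "(\<integral>\<^sup>+y. P1 y x \<partial>lborel) = (\<integral>\<^sup>+y. ennreal (indicator B x * (u x)\<^sup>2) * ennreal (h (y - x) * (a y - a x)\<^sup>2) \<partial>lborel)"
        unfolding P1_def using ann by (intro nn_integral_cong) (simp add: ennreal_mult[symmetric] mult.commute)
      also have "\<dots> = ennreal (indicator B x * (u x)\<^sup>2) * (\<integral>\<^sup>+y. ennreal (h (y - x) * (a y - a x)\<^sup>2) \<partial>lborel)"
        by (rule nn_integral_cmult) measurable
      finally show "(\<integral>\<^sup>+y. P1 y x \<partial>lborel) = ennreal (indicator B x * (u x)\<^sup>2) * (\<integral>\<^sup>+y. ennreal (h (y - x) * (a y - a x)\<^sup>2) \<partial>lborel)" .
    qed
    also have "(\<integral>\<^sup>+x. ennreal (indicator B x * (u x)\<^sup>2) * (\<integral>\<^sup>+y. ennreal (h (y - x) * (a y - a x)\<^sup>2) \<partial>lborel) \<partial>lborel)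
       \<le> (\<integral>\<^sup>+x. ennreal (indicator B x * (u x)\<^sup>2) * (ennreal (M powr (-\<alpha>)) * K) \<partial>lborel)"
      using kern1 by (intro nn_integral_mono) (simp add: mult_left_mono)
    also have "\<dots> = ennreal (M powr (-\<alpha>)) * K * I"
      unfolding I_def by (subst nn_integral_multc) (auto simp: mult.commute)
    finally show ?thesis .
  qed
  define CM where "CM = (4*M) powr (real CARD('n) + \<alpha>) / m"
  have CM: "0 < CM" unfolding CM_def using M m by simp
  have uB: "set_integrable lborel B u" using li compact_cube unfolding locally_integrable_def B_def by blast
  define Q where "Q y = (\<integral>\<^sup>+x. indicator B x * ennreal ((u y - u x)\<^sup>2) \<partial>lborel)" for y
  have Qm[measurable]: "Q \<in> borel_measurable lborel"
    unfolding Q_def by (rule lborel.borel_measurable_nn_integral) (unfold case_prod_beta, measurable)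
  have pt5: "ennreal ((u y)\<^sup>2) \<le> ennreal (2/mu) * Q y + ennreal (2 * S\<^sup>2 / mu\<^sup>2)" for y
  proof -
    have si: "set_integrable lborel B (\<lambda>x. u y - u x)"
      "set_lebesgue_integral lborel B (\<lambda>x. u y - u x) = u y * mu - S"
      using set_shift[OF _ emB _ uB, of "u y"] mu unfolding S_def by auto
    have cs: "ennreal ((u y * mu - S)\<^sup>2 / mu) \<le> Q y"
      using cs_ineq[OF _ emB mu si(1)] si(2) unfolding Q_def by simp
    have "u y = (u y * mu - S)/mu + S/mu" using mu by (simp add: field_simps)
    then have "(u y)\<^sup>2 \<le> 2*((u y * mu - S)/mu)\<^sup>2 + 2*(S/mu)\<^sup>2" using sq_le by metis
    also have "\<dots> = 2/mu * ((u y * mu - S)\<^sup>2 / mu) + 2 * S\<^sup>2 / mu\<^sup>2"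
      using mu by (simp add: power2_eq_square field_simps)
    finally have "ennreal ((u y)\<^sup>2) \<le> ennreal (2/mu * ((u y * mu - S)\<^sup>2 / mu) + 2 * S\<^sup>2 / mu\<^sup>2)"
      by (rule ennreal_leI)
    also have "\<dots> = ennreal (2/mu) * ennreal ((u y * mu - S)\<^sup>2 / mu) + ennreal (2 * S\<^sup>2 / mu\<^sup>2)"
    proof -
      have n1: "0 \<le> 2/mu * ((u y * mu - S)\<^sup>2 / mu)" "0 \<le> 2 * S\<^sup>2 / mu\<^sup>2" "0 \<le> 2/mu" "0 \<le> (u y * mu - S)\<^sup>2 / mu"
        using mu by auto
      show ?thesis by (simp only: ennreal_plus[OF n1(1,2)] ennreal_mult[OF n1(3,4)])
    qed
    also have "\<dots> \<le> ennreal (2/mu) * Q y + ennreal (2 * S\<^sup>2 / mu\<^sup>2)"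
      using cs by (intro add_mono mult_left_mono) auto
    finally show ?thesis .
  qed
  define PB where "PB = (\<integral>\<^sup>+y. indicator B y * Q y \<partial>lborel)"
  have I5: "I \<le> ennreal (2/mu) * PB + ennreal (2 * S\<^sup>2 / mu)"
  proof -
    have "I \<le> (\<integral>\<^sup>+y. ennreal (2/mu) * (indicator B y * Q y) + ennreal (2 * S\<^sup>2 / mu\<^sup>2) * indicator B y \<partial>lborel)"
      unfolding I_def
    proof (intro nn_integral_mono)
      fix y
      show "ennreal (indicator B y * (u y)\<^sup>2) \<le> ennreal (2/mu) * (indicator B y * Q y) + ennreal (2 * S\<^sup>2 / mu\<^sup>2) * indicator B y"
        using pt5[of y] by (cases "y \<in> B") auto
    qed
    also have "\<dots> = ennreal (2/mu) * PB + ennreal (2 * S\<^sup>2 / mu\<^sup>2) * emeasure lborel B"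
      unfolding PB_def by (subst nn_integral_add) (auto simp: nn_integral_cmult nn_integral_cmult_indicator)
    also have "ennreal (2 * S\<^sup>2 / mu\<^sup>2) * emeasure lborel B = ennreal (2 * S\<^sup>2 / mu)"
      unfolding emB using mu by (simp add: ennreal_mult[symmetric] power2_eq_square)
    finally show ?thesis .
  qed
  have PB5: "PB \<le> ennreal CM * E"
  proof -
    have "PB = (\<integral>\<^sup>+y. \<integral>\<^sup>+x. indicator B y * (indicator B x * ennreal ((u y - u x)\<^sup>2)) \<partial>lborel \<partial>lborel)"
      unfolding PB_def Q_def
    proof (intro nn_integral_cong)
      fix y
      show "indicator B y * (\<integral>\<^sup>+x. indicator B x * ennreal ((u y - u x)\<^sup>2) \<partial>lborel)
          = (\<integral>\<^sup>+x. indicator B y * (indicator B x * ennreal ((u y - u x)\<^sup>2)) \<partial>lborel)"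
        by (rule nn_integral_cmult[symmetric]) measurable
    qed
    also have "\<dots> \<le> (\<integral>\<^sup>+y. \<integral>\<^sup>+x. ennreal CM * Du y x \<partial>lborel \<partial>lborel)"
    proof (intro nn_integral_mono)
      fix x y
      show "indicator B y * (indicator B x * ennreal ((u y - u x)\<^sup>2)) \<le> ennreal CM * Du y x"
      proof (cases "x \<in> B \<and> y \<in> B \<and> x \<noteq> y")
        case True
        then have nz: "y - x \<noteq> 0" by auto
        have "maxnorm (y - x) \<le> maxnorm y + maxnorm x"
          using maxnorm_triangle[of y "- x"] maxnorm_minus[of x] by simp
        also have "\<dots> \<le> 4*M" using True unfolding B_def cube_def by simp
        finally have "m * (4*M) powr (- (real CARD('n) + \<alpha>)) \<le> h (y - x)" using m(2) nz by blast
        then have "CM * (m * (4*M) powr (- (real CARD('n) + \<alpha>))) \<le> CM * h (y - x)"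
          using CM by (intro mult_left_mono) auto
        moreover have "CM * (m * (4*M) powr (- (real CARD('n) + \<alpha>))) = 1"
        proof -
          have pw: "(4*M) powr (real CARD('n) + \<alpha>) * (4*M) powr (- (real CARD('n) + \<alpha>)) = 1"
            using M by (simp add: powr_add[symmetric])
          have e: "A / m * (m * P) = A * P" for A P using m by simp
          show ?thesis unfolding CM_def e by (rule pw)
        qed
        ultimately have "1 \<le> CM * h (y - x)" by simp
        then have "(u y - u x)\<^sup>2 \<le> CM * (h (y - x) * (u y - u x)\<^sup>2)"
          using mult_right_mono[of 1 "CM * h (y - x)" "(u y - u x)\<^sup>2"] by (simp add: mult.assoc)
        then have "ennreal ((u y - u x)\<^sup>2) \<le> ennreal (CM * (h (y - x) * (u y - u x)\<^sup>2))"
          by (rule ennreal_leI)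
        also have "\<dots> = ennreal CM * Du y x" unfolding Du_def using CM h_pos[OF nz]
          by (simp add: ennreal_mult)
        finally show ?thesis using True by simp
      next
        case False
        then show ?thesis by (auto simp: indicator_def)
      qed
    qed
    also have "\<dots> = ennreal CM * E"
      unfolding E_def Du_def[symmetric] by (simp add: nn_integral_cmult)
    finally show ?thesis .
  qed
  have step5: "I \<le> ennreal (2/mu) * ennreal CM * E + ennreal (2 * S\<^sup>2 / mu)"
  proof -
    have "ennreal (2/mu) * PB \<le> ennreal (2/mu) * (ennreal CM * E)" using PB5 by (rule mult_left_mono) simp
    then have "I \<le> ennreal (2/mu) * (ennreal CM * E) + ennreal (2 * S\<^sup>2 / mu)"
      using I5 by (meson add_right_mono order_trans)
    then show ?thesis by (simp add: mult.assoc)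
  qed
  define Ma where "Ma = M powr (-\<alpha>)"
  have Ma: "0 \<le> Ma" unfolding Ma_def by simp
  define iR where "iR = 2/mu*CM*e + 2*S\<^sup>2/mu"
  have iR: "0 \<le> iR" unfolding iR_def using mu CM e by auto
  have I_R: "I \<le> ennreal iR"
  proof -
    have "ennreal (2/mu) * ennreal CM = ennreal (2/mu*CM)"
      by (rule ennreal_mult[symmetric]) (use mu CM in auto)
    moreover have "ennreal (2/mu*CM) * ennreal e = ennreal (2/mu*CM*e)"
      by (rule ennreal_mult[symmetric]) (use mu CM e in auto)
    ultimately have "ennreal (2/mu) * ennreal CM * E = ennreal (2/mu*CM*e)"
      unfolding e(1) by simp
    then have "ennreal (2/mu) * ennreal CM * E + ennreal (2 * S\<^sup>2 / mu) = ennreal iR"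
      unfolding iR_def using mu CM e by (simp add: ennreal_plus)
    then show ?thesis using step5 by simp
  qed
  have T: "ennreal Ma * K * I \<le> ennreal (Ma*k*iR)"
  proof -
    have "ennreal Ma * K * I \<le> ennreal Ma * K * ennreal iR" using I_R by (rule mult_left_mono) simp
    also have "\<dots> = ennreal (Ma*k*iR)" using Knn Ma iR by (simp add: ennreal_mult)
    finally show ?thesis .
  qed
  have "energy h (\<lambda>x. cutoff ((1/M) *\<^sub>R x) * u x) \<le> ennreal e + ennreal (Ma*k*iR) + ennreal (Ma*k*iR)"
  proof -
    have "E + (\<integral>\<^sup>+y. \<integral>\<^sup>+x. P1 y x \<partial>lborel \<partial>lborel) + (\<integral>\<^sup>+y. \<integral>\<^sup>+x. P2 y x \<partial>lborel \<partial>lborel)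
       \<le> ennreal e + ennreal (Ma*k*iR) + ennreal (Ma*k*iR)"
    proof -
      have t1: "(\<integral>\<^sup>+y. \<integral>\<^sup>+x. P1 y x \<partial>lborel \<partial>lborel) \<le> ennreal (Ma*k*iR)"
        using step4 T unfolding Ma_def by (rule order_trans)
      have t2: "(\<integral>\<^sup>+y. \<integral>\<^sup>+x. P2 y x \<partial>lborel \<partial>lborel) \<le> ennreal (Ma*k*iR)"
        using step3 T unfolding Ma_def by (rule order_trans)
      have t0: "E \<le> ennreal e" using e(1) by simp
      show ?thesis by (rule add_mono[OF add_mono[OF t0 t1] t2])
    qed
    then show ?thesis using step2 by (rule order_trans[rotated])
  qed
  also have "\<dots> = ennreal (e + 2*(Ma*k*iR))"
  proof -
    have X: "0 \<le> Ma*k*iR" using Ma Knn iR by simp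
    have "ennreal e + ennreal (Ma*k*iR) = ennreal (e + Ma*k*iR)" by (rule ennreal_plus[symmetric]) (use e(2) X in auto)
    moreover have "ennreal (e + Ma*k*iR) + ennreal (Ma*k*iR) = ennreal (e + Ma*k*iR + Ma*k*iR)"
      by (rule ennreal_plus[symmetric]) (use e(2) X in auto)
    ultimately have "ennreal e + ennreal (Ma*k*iR) + ennreal (Ma*k*iR) = ennreal (e + Ma*k*iR + Ma*k*iR)" by simp
    also have "e + Ma*k*iR + Ma*k*iR = e + 2*(Ma*k*iR)" by simp
    finally show ?thesis .
  qed
  also have "e + 2*(Ma*k*iR) \<le> (2 + 8 * k * 4 powr \<alpha> / m) * (e/2)
      + 4 * k / M powr (real CARD('n) + \<alpha>) * S\<^sup>2"
  proof -
    define P where "P = M powr \<alpha>"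
    define D where "D = M ^ CARD('n)"
    define F where "F = (4::real) ^ CARD('n)"
    have P: "0 < P" unfolding P_def using M by simp
    have D: "0 < D" unfolding D_def using M by simp
    have F: "1 \<le> F" unfolding F_def by simp
    have Ma_eq: "Ma = 1 / P" unfolding Ma_def P_def by (simp add: powr_minus inverse_eq_divide)
    have mu_eq: "mu = F * D" unfolding mu_def F_def D_def by (simp add: power_mult_distrib)
    have CM_eq: "CM = F * D * 4 powr \<alpha> * P / m"
    proof -
      have "(4*M) powr (real CARD('n) + \<alpha>) = (4*M) powr (real CARD('n)) * (4*M) powr \<alpha>"
        by (simp add: powr_add)
      also have "\<dots> = F * D * (4 powr \<alpha> * P)"
        unfolding F_def D_def P_def using M by (simp add: powr_realpow powr_mult power_mult_distrib)
      finally show ?thesis unfolding CM_def by simp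
    qed
    have Md: "M powr (real CARD('n) + \<alpha>) = D * P"
      unfolding D_def P_def using M by (simp add: powr_add powr_realpow)
    define Z where "Z = 4 * k * S\<^sup>2 / (D * P)"
    have Z: "0 \<le> Z" unfolding Z_def using Knn D P by simp
    have lhs: "e + 2*(Ma*k*iR) = e + 4 * k * 4 powr \<alpha> * e / m + Z / F"
      unfolding Ma_eq iR_def mu_eq CM_eq Z_def by (rule alg1) (use P D F m in auto)
    have rhs: "(2 + 8 * k * 4 powr \<alpha> / m) * (e/2) + 4 * k / M powr (real CARD('n) + \<alpha>) * S\<^sup>2
        = e + 4 * k * 4 powr \<alpha> * e / m + Z"
      unfolding Md Z_def by (rule alg2) (use P D m in auto)
    have "Z / F \<le> Z" using Z F by (simp add: divide_le_eq mult_le_cancel_left1)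
    then show ?thesis unfolding lhs rhs by simp
  qed
  then have "ennreal (e + 2*(Ma*k*iR)) \<le> ennreal ((2 + 8 * k * 4 powr \<alpha> / m) * (e/2)
      + 4 * k / M powr (real CARD('n) + \<alpha>) * S\<^sup>2)" by (rule ennreal_leI)
  also have "\<dots> = ennreal (2 + 8 * k * 4 powr \<alpha> / m) * energy h u + ennreal (4 * k / M powr (real CARD('n) + \<alpha>) * S\<^sup>2)"
  proof -
    have "ennreal (1/2) * ennreal e = ennreal (1/2 * e)" by (rule ennreal_mult[symmetric]) (use e(2) in auto)
    then have "energy h u = ennreal (e/2)" unfolding enE e(1) by simp
    moreover have "0 \<le> 2 + 8 * k * 4 powr \<alpha> / m" using Knn m by simp
    moreover have "0 \<le> 4 * k / M powr (real CARD('n) + \<alpha>) * S\<^sup>2" using Knn by simp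
    moreover have "0 \<le> (2 + 8 * k * 4 powr \<alpha> / m) * (e/2)" using Knn m e by simp
    ultimately show ?thesis using e(2)
      by (simp only: ennreal_plus ennreal_mult)
  qed
  finally show ?thesis unfolding k_def S_def B_def .
qed

end


theorem lemma11:
  fixes h :: "real^'n \<Rightarrow> real" and \<alpha> :: real
  assumes alpha: "0 < \<alpha>" "\<alpha> < 2"
    and h_cont: "continuous_on (UNIV - {0}) h"
    and h_pos: "\<And>x. x \<noteq> 0 \<Longrightarrow> h x > 0"
    and h_even: "\<And>x. x \<noteq> 0 \<Longrightarrow> h (- x) = h x"
    and h_hom: "\<And>x t. x \<noteq> 0 \<Longrightarrow> t > 0 \<Longrightarrow>
                  h (t *\<^sub>R x) = t powr (- (real CARD('n) + \<alpha>)) * h x"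
  shows "\<exists>c::real. c > 0 \<and>
    (\<forall>u M. locally_integrable u \<longrightarrow> energy h u < \<infinity> \<longrightarrow> M > 0 \<longrightarrow>
       (let uM = (\<lambda>x. cutoff ((1 / M) *\<^sub>R x) * u x) in
          energy h uM < \<infinity> \<and>
          energy h uM \<le> ennreal c * energy h u
            + ennreal (c / M powr (real CARD('n) + \<alpha>) *
                       (set_lebesgue_integral lborel (cube (2 * M)) u)\<^sup>2)))"
proof -
  interpret kern h \<alpha>
    by unfold_locales (use alpha h_cont h_pos h_even h_hom in auto)
  obtain m where m: "m > 0" "\<forall>z R. z \<noteq> 0 \<longrightarrow> maxnorm z \<le> R \<longrightarrow> m * R powr (- (real CARD('n) + \<alpha>)) \<le> h z"
    using h_lower_norm by blast
  define k where "k = enn2real K"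
  have k: "0 \<le> k" unfolding k_def using K_real by simp
  define c where "c = 2 + 8 * k * 4 powr \<alpha> / m + 4 * k"
  have c0: "2 + 8 * k * 4 powr \<alpha> / m \<le> c" "4 * k \<le> c" unfolding c_def using k m by auto
  have cpos: "c > 0" unfolding c_def using k m by (simp add: add_pos_nonneg)
  show ?thesis
  proof (intro exI[of _ c] conjI allI impI)
    show "c > 0" by (rule cpos)
    fix u :: "real^'n \<Rightarrow> real" and M :: real
    assume li: "locally_integrable u" and fin: "energy h u < \<infinity>" and M: "M > 0"
    define S where "S = set_lebesgue_integral lborel (cube (2 * M)) u"
    have mn: "energy h (\<lambda>x. cutoff ((1/M) *\<^sub>R x) * u x)
       \<le> ennreal (2 + 8 * k * 4 powr \<alpha> / m) * energy h u
         + ennreal (4 * k / M powr (real CARD('n) + \<alpha>) * S\<^sup>2)"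
      using main[OF li fin M m] unfolding k_def S_def .
    also have "\<dots> \<le> ennreal c * energy h u + ennreal (c / M powr (real CARD('n) + \<alpha>) * S\<^sup>2)"
    proof (rule add_mono)
      show "ennreal (2 + 8 * k * 4 powr \<alpha> / m) * energy h u \<le> ennreal c * energy h u"
        using c0(1) by (intro mult_right_mono ennreal_leI) auto
      have "4 * k / M powr (real CARD('n) + \<alpha>) \<le> c / M powr (real CARD('n) + \<alpha>)"
        using c0(2) M by (intro divide_right_mono) auto
      then have "4 * k / M powr (real CARD('n) + \<alpha>) * S\<^sup>2 \<le> c / M powr (real CARD('n) + \<alpha>) * S\<^sup>2"
        by (intro mult_right_mono) auto
      then show "ennreal (4 * k / M powr (real CARD('n) + \<alpha>) * S\<^sup>2) \<le> ennreal (c / M powr (real CARD('n) + \<alpha>) * S\<^sup>2)"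
        by (rule ennreal_leI)
    qed
    finally have le: "energy h (\<lambda>x. cutoff ((1/M) *\<^sub>R x) * u x)
       \<le> ennreal c * energy h u + ennreal (c / M powr (real CARD('n) + \<alpha>) * S\<^sup>2)" .
    have "ennreal c * energy h u + ennreal (c / M powr (real CARD('n) + \<alpha>) * S\<^sup>2) < \<infinity>"
      using fin by (simp add: ennreal_mult_less_top less_top)
    then have "energy h (\<lambda>x. cutoff ((1/M) *\<^sub>R x) * u x) < \<infinity>" using le by (rule le_less_trans[rotated])
    then show "let uM = (\<lambda>x. cutoff ((1 / M) *\<^sub>R x) * u x) in
          energy h uM < \<infinity> \<and>
          energy h uM \<le> ennreal c * energy h u
            + ennreal (c / M powr (real CARD('n) + \<alpha>) *
                       (set_lebesgue_integral lborel (cube (2 * M)) u)\<^sup>2)"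
      using le unfolding S_def Let_def by simp
  qed
qed

end
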